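(* Let $\mathcal V\subseteq B(H)$ be a concrete operator system (a unital self-adjoint subspace) and suppose $p\in\mathcal V$ is a projection in $B(H)$. Then the abstract compression $(\mathcal V/J_p,\{\widetilde C(p_n)\}_n,p+J_p)$ is completely order isomorphic to the concrete compression operator system $p\mathcal V p\subseteq B(pH)$ (with unit $p$).
   Context: Here $\mathcal V$ carries the matrix order inherited from $B(H)$ with unit $I$; $p_n=I_n\otimes p$. Define $C(p_n)=\{x\in M_n(\mathcal V): x=x^*,\ \forall\epsilon>0\ \exists t>0 \text{ with } x+\epsilon p_n+t(I_n\otimes I-p_n)\ge 0 \text{ in } B(H^n)\}$, $J_p=\operatorname{span}(C(p)\cap -C(p))$, and $\widetilde C(p_n)=\{(x_{ij}+J_p)\in M_n(\mathcal V/J_p):(x_{ij})\in C(p_n)\}$. *)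

theory Defs
  imports Complex_Main
begin

(* A complex Hilbert space on the carrier type 'h: complex scalar multiplication sc,
   inner product ip (linear in the first, conjugate-linear in the second argument). *)
definition hnorm :: "('h \<Rightarrow> 'h \<Rightarrow> complex) \<Rightarrow> 'h \<Rightarrow> real" where
  "hnorm ip x = sqrt (Re (ip x x))"

definition complex_hilbert :: "(complex \<Rightarrow> 'h::ab_group_add \<Rightarrow> 'h) \<Rightarrow> ('h \<Rightarrow> 'h \<Rightarrow> complex) \<Rightarrow> bool" where
  "complex_hilbert sc ip \<longleftrightarrow>
     (\<forall>x. sc 1 x = x) \<and> (\<forall>a b x. sc a (sc b x) = sc (a * b) x) \<and>
     (\<forall>a x y. sc a (x + y) = sc a x + sc a y) \<and> (\<forall>a b x. sc (a + b) x = sc a x + sc b x) \<and>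
     (\<forall>x y z. ip (x + y) z = ip x z + ip y z) \<and> (\<forall>a x y. ip (sc a x) y = a * ip x y) \<and>
     (\<forall>x y. ip y x = cnj (ip x y)) \<and> (\<forall>x. ip x x \<in> \<real> \<and> Re (ip x x) \<ge> 0) \<and>
     (\<forall>x. ip x x = 0 \<longrightarrow> x = 0) \<and>
     (\<forall>X::nat \<Rightarrow> 'h. (\<forall>e>0. \<exists>N. \<forall>m\<ge>N. \<forall>n\<ge>N. hnorm ip (X m - X n) < e) \<longrightarrow>
        (\<exists>L. \<forall>e>0. \<exists>N. \<forall>n\<ge>N. hnorm ip (X n - L) < e))"

definition bounded_op :: "(complex \<Rightarrow> 'h::ab_group_add \<Rightarrow> 'h) \<Rightarrow> ('h \<Rightarrow> 'h \<Rightarrow> complex) \<Rightarrow> ('h \<Rightarrow> 'h) \<Rightarrow> bool" where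
  "bounded_op sc ip T \<longleftrightarrow> (\<forall>x y. T (x + y) = T x + T y) \<and> (\<forall>a x. T (sc a x) = sc a (T x)) \<and>
     (\<exists>K. \<forall>x. hnorm ip (T x) \<le> K * hnorm ip x)"

definition adj :: "('h \<Rightarrow> 'h \<Rightarrow> complex) \<Rightarrow> ('h \<Rightarrow> 'h) \<Rightarrow> ('h \<Rightarrow> 'h)" where
  "adj ip T = (SOME S. \<forall>x y. ip (T x) y = ip x (S y))"

definition is_projection :: "(complex \<Rightarrow> 'h::ab_group_add \<Rightarrow> 'h) \<Rightarrow> ('h \<Rightarrow> 'h \<Rightarrow> complex) \<Rightarrow> ('h \<Rightarrow> 'h) \<Rightarrow> bool" where
  "is_projection sc ip p \<longleftrightarrow> bounded_op sc ip p \<and> p \<circ> p = p \<and> adj ip p = p"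

definition operator_system :: "(complex \<Rightarrow> 'h::ab_group_add \<Rightarrow> 'h) \<Rightarrow> ('h \<Rightarrow> 'h \<Rightarrow> complex) \<Rightarrow> ('h \<Rightarrow> 'h) set \<Rightarrow> bool" where
  "operator_system sc ip V \<longleftrightarrow> (\<forall>T\<in>V. bounded_op sc ip T) \<and> id \<in> V \<and>
     (\<forall>x\<in>V. \<forall>y\<in>V. (\<lambda>h. x h + y h) \<in> V) \<and> (\<forall>a. \<forall>x\<in>V. (\<lambda>h. sc a (x h)) \<in> V) \<and>
     (\<forall>x\<in>V. adj ip x \<in> V)"

(* positivity of an n x n operator matrix M = (M i j) in B(H^n) *)
definition mat_pos :: "('h::comm_monoid_add \<Rightarrow> 'h \<Rightarrow> complex) \<Rightarrow> nat \<Rightarrow> (nat \<Rightarrow> nat \<Rightarrow> 'h \<Rightarrow> 'h) \<Rightarrow> bool" where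
  "mat_pos ip n M \<longleftrightarrow> (\<forall>h::nat \<Rightarrow> 'h. (\<Sum>i<n. \<Sum>j<n. ip (M i j (h j)) (h i)) \<in> \<real> \<and>
                                       Re (\<Sum>i<n. \<Sum>j<n. ip (M i j (h j)) (h i)) \<ge> 0)"

definition inCp :: "(complex \<Rightarrow> 'h::ab_group_add \<Rightarrow> 'h) \<Rightarrow> ('h \<Rightarrow> 'h \<Rightarrow> complex) \<Rightarrow> ('h \<Rightarrow> 'h) set \<Rightarrow> ('h \<Rightarrow> 'h)
     \<Rightarrow> nat \<Rightarrow> (nat \<Rightarrow> nat \<Rightarrow> 'h \<Rightarrow> 'h) \<Rightarrow> bool" where
  "inCp sc ip V p n x \<longleftrightarrow> (\<forall>i<n. \<forall>j<n. x i j \<in> V) \<and> (\<forall>i<n. \<forall>j<n. x j i = adj ip (x i j)) \<and>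
     (\<forall>\<epsilon>::real>0. \<exists>t::real>0. mat_pos ip n
        (\<lambda>i j h. x i j h + (if i = j then sc (complex_of_real \<epsilon>) (p h) + sc (complex_of_real t) (h - p h) else 0)))"

definition Cp1 :: "(complex \<Rightarrow> 'h::ab_group_add \<Rightarrow> 'h) \<Rightarrow> ('h \<Rightarrow> 'h \<Rightarrow> complex) \<Rightarrow> ('h \<Rightarrow> 'h) set \<Rightarrow> ('h \<Rightarrow> 'h) \<Rightarrow> ('h \<Rightarrow> 'h) set" where
  "Cp1 sc ip V p = {a. inCp sc ip V p 1 (\<lambda>_ _. a)}"

definition cspan :: "(complex \<Rightarrow> 'h::ab_group_add \<Rightarrow> 'h) \<Rightarrow> ('h \<Rightarrow> 'h) set \<Rightarrow> ('h \<Rightarrow> 'h) set" where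
  "cspan sc S = {T. \<exists>(m::nat) c x. (\<forall>k<m. x k \<in> S) \<and> T = (\<lambda>h. \<Sum>k<m. sc (c k) (x k h))}"

definition Jp :: "(complex \<Rightarrow> 'h::ab_group_add \<Rightarrow> 'h) \<Rightarrow> ('h \<Rightarrow> 'h \<Rightarrow> complex) \<Rightarrow> ('h \<Rightarrow> 'h) set \<Rightarrow> ('h \<Rightarrow> 'h) \<Rightarrow> ('h \<Rightarrow> 'h) set" where
  "Jp sc ip V p = cspan sc (Cp1 sc ip V p \<inter> {a. (\<lambda>h. - a h) \<in> Cp1 sc ip V p})"

definition coset :: "('h::ab_group_add \<Rightarrow> 'h) set \<Rightarrow> ('h \<Rightarrow> 'h) \<Rightarrow> ('h \<Rightarrow> 'h) set" where
  "coset J x = {(\<lambda>h. x h + j h) | j. j \<in> J}"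

definition quot :: "('h::ab_group_add \<Rightarrow> 'h) set \<Rightarrow> ('h \<Rightarrow> 'h) set \<Rightarrow> ('h \<Rightarrow> 'h) set set" where
  "quot V J = coset J ` V"

definition inCtilde :: "(complex \<Rightarrow> 'h::ab_group_add \<Rightarrow> 'h) \<Rightarrow> ('h \<Rightarrow> 'h \<Rightarrow> complex) \<Rightarrow> ('h \<Rightarrow> 'h) set \<Rightarrow> ('h \<Rightarrow> 'h)
     \<Rightarrow> nat \<Rightarrow> (nat \<Rightarrow> nat \<Rightarrow> ('h \<Rightarrow> 'h) set) \<Rightarrow> bool" where
  "inCtilde sc ip V p n Y \<longleftrightarrow> (\<exists>x. inCp sc ip V p n x \<and>
      (\<forall>i<n. \<forall>j<n. Y i j = coset (Jp sc ip V p) (x i j)))"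

(* positivity in M_n(B(pH)) of a matrix of compressions (operators on H of the form p y p),
   tested on vectors of (pH)^n *)
definition compr_pos :: "('h::comm_monoid_add \<Rightarrow> 'h \<Rightarrow> complex) \<Rightarrow> ('h \<Rightarrow> 'h) \<Rightarrow> nat \<Rightarrow> (nat \<Rightarrow> nat \<Rightarrow> 'h \<Rightarrow> 'h) \<Rightarrow> bool" where
  "compr_pos ip p n M \<longleftrightarrow> (\<forall>h::nat \<Rightarrow> 'h. (\<forall>j<n. h j \<in> range p) \<longrightarrow>
      (\<Sum>i<n. \<Sum>j<n. ip (M i j (h j)) (h i)) \<in> \<real> \<and> Re (\<Sum>i<n. \<Sum>j<n. ip (M i j (h j)) (h i)) \<ge> 0)"

end

theory Submission
  imports Defs
begin

locale hs =
  fixes sc :: "complex \<Rightarrow> 'h::ab_group_add \<Rightarrow> 'h" and ip :: "'h \<Rightarrow> 'h \<Rightarrow> complex"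
  assumes H: "complex_hilbert sc ip"
begin

lemmas HH = H[unfolded complex_hilbert_def]
lemma sc_one[simp]: "sc 1 x = x" using HH[THEN conjunct1] by (rule spec)
lemma sc_assoc: "sc a (sc b x) = sc (a * b) x" using HH[THEN conjunct2, THEN conjunct1] by (elim allE)
lemma sc_add_r: "sc a (x + y) = sc a x + sc a y" using HH by blast
lemma sc_add_l: "sc (a + b) x = sc a x + sc b x" using HH by blast
lemma ip_add_l: "ip (x + y) z = ip x z + ip y z" using HH by blast
lemma ip_sc_l: "ip (sc a x) y = a * ip x y" using HH by blast
lemma ip_cnj: "ip y x = cnj (ip x y)" using HH by blast
lemma ip_self1: "ip x x \<in> \<real>" using HH by blast
lemma ip_self2: "Re (ip x x) \<ge> 0" using HH by blast
lemmas ip_self = ip_self1 ip_self2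
lemma ip_def0: "ip x x = 0 \<Longrightarrow> x = 0" using HH by blast
lemma complete: fixes X :: "nat \<Rightarrow> 'h" shows "(\<forall>e>0. \<exists>N. \<forall>m\<ge>N. \<forall>n\<ge>N. hnorm ip (X m - X n) < e) \<Longrightarrow>
        (\<exists>L. \<forall>e>0. \<exists>N. \<forall>n\<ge>N. hnorm ip (X n - L) < e)"
  using HH by blast

lemma sc_0_l[simp]: "sc 0 x = 0"
proof -
  have "sc 0 x = sc 0 x + sc 0 x" using sc_add_l[of 0 0 x] by simp
  then show ?thesis by simp
qed
lemma sc_0_r[simp]: "sc a 0 = 0"
proof -
  have "sc a 0 = sc a 0 + sc a 0" using sc_add_r[of a 0 0] by simp
  then show ?thesis by simp
qed
lemma sc_neg_r: "sc a (- x) = - sc a x"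
proof -
  have "sc a (- x) + sc a x = 0" using sc_add_r[of a "-x" x] by simp
  then show ?thesis by (simp add: eq_neg_iff_add_eq_0)
qed
lemma sc_diff_r: "sc a (x - y) = sc a x - sc a y"
  using sc_add_r[of a x "-y"] sc_neg_r by simp
lemma sc_neg_l: "sc (- a) x = - sc a x"
proof -
  have "sc (-a) x + sc a x = 0" using sc_add_l[of "-a" a x] by simp
  then show ?thesis by (simp add: eq_neg_iff_add_eq_0)
qed

lemma ip_add_r: "ip z (x + y) = ip z x + ip z y"
  by (metis ip_cnj ip_add_l complex_cnj_add)
lemma ip_sc_r: "ip x (sc a y) = cnj a * ip x y"
  by (metis ip_cnj ip_sc_l complex_cnj_mult)
lemma ip_0_l[simp]: "ip 0 y = 0"
proof -
  have "ip 0 y = ip 0 y + ip 0 y" using ip_add_l[of 0 0 y] by simp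
  then show ?thesis by simp
qed
lemma ip_0_r[simp]: "ip y 0 = 0"
  by (metis ip_cnj ip_0_l complex_cnj_zero)
lemma ip_neg_l: "ip (- x) y = - ip x y"
  using ip_add_l[of x "-x" y] by (simp add: eq_neg_iff_add_eq_0 add.commute)
lemma ip_neg_r: "ip y (- x) = - ip y x"
  by (metis ip_cnj ip_neg_l complex_cnj_minus)
lemma ip_diff_l: "ip (x - z) y = ip x y - ip z y"
  using ip_add_l[of x "-z" y] ip_neg_l by simp
lemma ip_diff_r: "ip y (x - z) = ip y x - ip y z"
  using ip_add_r[of y x "-z"] ip_neg_r by simp
lemma ip_sum_l: "ip (\<Sum>k\<in>A. f k) y = (\<Sum>k\<in>A. ip (f k) y)"
  by (induct A rule: infinite_finite_induct) (simp_all add: ip_add_l)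
lemma ip_sum_r: "ip y (\<Sum>k\<in>A. f k) = (\<Sum>k\<in>A. ip y (f k))"
  by (induct A rule: infinite_finite_induct) (simp_all add: ip_add_r)

lemmas ip_simps = ip_add_l ip_add_r ip_sc_l ip_sc_r ip_neg_l ip_neg_r ip_diff_l ip_diff_r

lemma ip_self_of_real: "ip x x = of_real (Re (ip x x))"
  using ip_self(1) by (metis Reals_cases Re_complex_of_real)
lemma ip_self_zero_iff[simp]: "ip x x = 0 \<longleftrightarrow> x = 0"
  using ip_def0 by auto
lemma hnorm_nonneg: "hnorm ip x \<ge> 0" unfolding hnorm_def using ip_self2[of x] by simp
lemma hnorm_sq: "(hnorm ip x)^2 = Re (ip x x)" unfolding hnorm_def using ip_self2[of x] by simp
lemma hnorm_neg: "hnorm ip (- x) = hnorm ip x" unfolding hnorm_def by (simp add: ip_neg_l ip_neg_r)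
lemma hnorm_minus_commute: "hnorm ip (x - y) = hnorm ip (y - x)"
  by (metis hnorm_neg minus_diff_eq)

lemma ip_ext_r: assumes "\<And>x. ip x a = ip x b" shows "a = b"
proof -
  have "ip (a - b) (a - b) = 0" using assms[of "a-b"] by (simp add: ip_diff_r)
  then show ?thesis by simp
qed

lemma proj_expand:
  assumes "y \<noteq> 0"
  shows "Re (ip (x - sc (ip x y / ip y y) y) (x - sc (ip x y / ip y y) y))
        = Re (ip x x) - (cmod (ip x y))^2 / Re (ip y y)"
proof -
  define r where "r = Re (ip y y)"
  have ry: "ip y y = of_real r" unfolding r_def by (rule ip_self_of_real)
  have r0: "r \<noteq> 0" using assms ry by (metis ip_self_zero_iff of_real_0)
  define c where "c = ip x y"
  have yx: "ip y x = cnj c" unfolding c_def by (rule ip_cnj)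
  have "ip (x - sc (c / of_real r) y) (x - sc (c / of_real r) y)
      = ip x x - cnj (c / of_real r) * c - (c / of_real r) * cnj c + (c / of_real r) * cnj (c / of_real r) * of_real r"
    by (simp add: ip_simps ry yx c_def[symmetric] algebra_simps)
  also have "\<dots> = ip x x - c * cnj c / of_real r"
    using r0 by (simp add: field_simps)
  also have "c * cnj c = of_real ((cmod c)^2)" by (rule complex_norm_square[symmetric])
  finally show ?thesis unfolding c_def[symmetric] r_def[symmetric] ry
    by (simp add: ry)
qed

lemma cauchy_schwarz: "cmod (ip x y) \<le> hnorm ip x * hnorm ip y"
proof (cases "y = 0")
  case True then show ?thesis by (simp add: hnorm_nonneg)
next
  case False
  have r: "Re (ip y y) > 0" using False ip_self(2)[of y] ip_self_of_real[of y]
    by (metis ip_self_zero_iff less_eq_real_def of_real_0)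
  have "0 \<le> Re (ip x x) - (cmod (ip x y))^2 / Re (ip y y)"
    using proj_expand[OF False, of x] ip_self(2) by metis
  then have "(cmod (ip x y))^2 \<le> Re (ip x x) * Re (ip y y)"
    using r by (simp add: field_simps)
  also have "\<dots> = (hnorm ip x * hnorm ip y)^2" by (simp add: hnorm_sq power_mult_distrib)
  finally show ?thesis
    by (meson hnorm_nonneg mult_nonneg_nonneg power2_le_imp_le)
qed

lemma hnorm_triangle: "hnorm ip (x + y) \<le> hnorm ip x + hnorm ip y"
proof -
  have "Re (ip (x+y) (x+y)) = Re (ip x x) + Re (ip y y) + 2 * Re (ip x y)"
    using ip_cnj[of y x] by (simp add: ip_add_l ip_add_r)
  also have "\<dots> \<le> Re (ip x x) + Re (ip y y) + 2 * (hnorm ip x * hnorm ip y)"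
    using cauchy_schwarz[of x y] complex_Re_le_cmod[of "ip x y"] by linarith
  also have "\<dots> = (hnorm ip x + hnorm ip y)^2" by (simp add: hnorm_sq power2_sum)
  finally have "(hnorm ip (x+y))^2 \<le> (hnorm ip x + hnorm ip y)^2" by (simp add: hnorm_sq)
  then show ?thesis by (meson hnorm_nonneg add_nonneg_nonneg power2_le_imp_le)
qed


lemma le_eps_zero: fixes a b :: real assumes "b \<ge> 0" "\<And>e. e > 0 \<Longrightarrow> a \<le> b * e" shows "a \<le> 0"
proof (rule ccontr)
  assume "\<not> a \<le> 0"
  then have a: "a > 0" by simp
  have "a \<le> b * (a / (b + 1))" using assms(2)[of "a/(b+1)"] a assms(1) by simp
  also have "\<dots> < a" using a assms(1) by (simp add: field_simps)
  finally show False by simp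
qed

lemma riesz:
  fixes f :: "'h \<Rightarrow> complex"
  assumes add: "\<And>x y. f (x + y) = f x + f y"
    and hom: "\<And>a x. f (sc a x) = a * f x"
    and bnd: "\<And>x. cmod (f x) \<le> C * hnorm ip x"
  shows "\<exists>z. \<forall>x. f x = ip x z"
proof (cases "\<forall>x. f x = 0")
  case True then show ?thesis by (intro exI[of _ 0]) simp
next
  case False
  then obtain x0 where x0: "f x0 \<noteq> 0" by blast
  have f0: "f 0 = 0" using hom[of 0 0] by simp
  have fdiff: "f (x - y) = f x - f y" for x y using add[of "x - y" y] by simp
  define x1 where "x1 = sc (1 / f x0) x0"
  have fx1: "f x1 = 1" unfolding x1_def hom using x0 by simp
  define D where "D = {Re (ip v v) | v. f v = 1}"
  define d where "d = Inf D"
  have Dne: "D \<noteq> {}" unfolding D_def using fx1 by blast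
  have Dbdd: "bdd_below D" unfolding D_def bdd_below_def using ip_self2 by blast
  have dle: "d \<le> Re (ip v v)" if "f v = 1" for v
  proof -
    have "Re (ip v v) \<in> D" using that D_def by blast
    then show ?thesis unfolding d_def using Dbdd by (rule cInf_lower)
  qed
  have "\<exists>v. f v = 1 \<and> Re (ip v v) < d + 1 / real (Suc k)" for k
  proof -
    have "Inf D < d + 1 / real (Suc k)" unfolding d_def by simp
    from cInf_lessD[OF Dne this] show ?thesis unfolding D_def by blast
  qed
  then obtain X where X1: "\<And>k. f (X k) = 1" and X2: "\<And>k. Re (ip (X k) (X k)) < d + 1 / real (Suc k)"
    by metis
  have d0: "d \<ge> 0" unfolding d_def by (rule cInf_greatest[OF Dne]) (auto simp: D_def ip_self2)
  have para: "Re (ip (u - v) (u - v)) \<le> 2 * Re (ip u u) + 2 * Re (ip v v) - 4 * d"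
    if "f u = 1" "f v = 1" for u v
  proof -
    define m where "m = sc (1/2) (u + v)"
    have "f m = 1" unfolding m_def hom add using that by simp
    then have "d \<le> Re (ip m m)" by (rule dle)
    also have "ip m m = (1/4) * ip (u + v) (u + v)" unfolding m_def by (simp add: ip_sc_l ip_sc_r)
    finally have "4 * d \<le> Re (ip (u + v) (u + v))" by simp
    moreover have eqc: "ip (u - v) (u - v) + ip (u + v) (u + v) = 2 * ip u u + 2 * ip v v"
      by (simp add: ip_simps algebra_simps)
    have "Re (ip (u - v) (u - v)) + Re (ip (u + v) (u + v)) = 2 * Re (ip u u) + 2 * Re (ip v v)"
      using arg_cong[OF eqc, of Re] by simp
    ultimately show ?thesis by linarith
  qed
  have cauchy: "\<forall>e>0. \<exists>N. \<forall>m\<ge>N. \<forall>n\<ge>N. hnorm ip (X m - X n) < e"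
  proof (intro allI impI)
    fix e :: real assume e: "e > 0"
    obtain N where N: "4 / e^2 < real N" using reals_Archimedean2 by blast
    have "\<forall>m\<ge>N. \<forall>n\<ge>N. hnorm ip (X m - X n) < e"
    proof (intro allI impI)
      fix m n assume mn: "m \<ge> N" "n \<ge> N"
      have "Re (ip (X m - X n) (X m - X n)) \<le> 2 * Re (ip (X m) (X m)) + 2 * Re (ip (X n) (X n)) - 4 * d"
        by (rule para[OF X1 X1])
      also have "\<dots> < 2 * (d + 1 / real (Suc m)) + 2 * (d + 1 / real (Suc n)) - 4 * d"
        by (intro diff_strict_right_mono add_strict_mono mult_strict_left_mono X2) auto
      also have "\<dots> = 2 / real (Suc m) + 2 / real (Suc n)" by simp
      also have "\<dots> \<le> 2 / real (Suc N) + 2 / real (Suc N)"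
      proof (intro add_mono divide_left_mono)
        show "real (Suc N) \<le> real (Suc m)" "real (Suc N) \<le> real (Suc n)" using mn by simp_all
      qed simp_all
      also have "\<dots> = 4 / real (Suc N)" by simp
      also have "\<dots> < e^2"
      proof -
        have e2: "e^2 > 0" using e by simp
        have "4 < real N * e^2" using N pos_divide_less_eq[OF e2, of 4 "real N"] by simp
        also have "\<dots> \<le> real (Suc N) * e^2" using e by simp
        finally show ?thesis using pos_divide_less_eq[of "real (Suc N)" 4 "e^2"] by (simp add: mult.commute)
      qed
      finally have lt: "Re (ip (X m - X n) (X m - X n)) < e^2" .
      have "(hnorm ip (X m - X n))^2 < e^2" using lt by (simp only: hnorm_sq)
      then show "hnorm ip (X m - X n) < e" using e
        using power_less_imp_less_base[of "hnorm ip (X m - X n)" 2 e] by simp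
    qed
    then show "\<exists>N. \<forall>m\<ge>N. \<forall>n\<ge>N. hnorm ip (X m - X n) < e" by blast
  qed
  obtain w where w: "\<And>e. e > 0 \<Longrightarrow> \<exists>N. \<forall>n\<ge>N. hnorm ip (X n - w) < e"
    using complete[OF cauchy] by blast
  have fw: "f w = 1"
  proof -
    have "cmod (1 - f w) \<le> \<bar>C\<bar> * e" if e: "e > 0" for e
    proof -
      obtain N where "\<forall>n\<ge>N. hnorm ip (X n - w) < e" using w e by blast
      then have h: "hnorm ip (X N - w) < e" by simp
      have "cmod (1 - f w) = cmod (f (X N - w))" using X1 fdiff by simp
      also have "\<dots> \<le> C * hnorm ip (X N - w)" by (rule bnd)
      also have "\<dots> \<le> \<bar>C\<bar> * hnorm ip (X N - w)"
        by (intro mult_right_mono abs_ge_self hnorm_nonneg)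
      also have "\<dots> \<le> \<bar>C\<bar> * e" using h by (intro mult_left_mono) auto
      finally show ?thesis .
    qed
    then have "cmod (1 - f w) \<le> 0" by (intro le_eps_zero[of "\<bar>C\<bar>"]) auto
    then show ?thesis by simp
  qed
  have wmin: "Re (ip w w) \<le> d"
  proof -
    have he: "hnorm ip w \<le> sqrt d + 2 * e" if e: "e > 0" for e
    proof -
      obtain N where N: "\<forall>n\<ge>N. hnorm ip (X n - w) < e" using w e by blast
      obtain K where K: "1 / e^2 < real K" using reals_Archimedean2 by blast
      define n where "n = max N K"
      have h1: "hnorm ip (w - X n) < e" using N hnorm_minus_commute[of w "X n"] n_def by simp
      have e2: "e^2 > 0" using e by simp
      have "1 < real K * e^2" using K pos_divide_less_eq[OF e2, of 1 "real K"] by simp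
      also have "\<dots> \<le> real (Suc n) * e^2" using e n_def by simp
      finally have "1 / real (Suc n) \<le> e^2"
        using pos_divide_less_eq[of "real (Suc n)" 1 "e^2"] by (simp add: mult.commute)
      then have "sqrt (1 / real (Suc n)) \<le> sqrt (e^2)" by (rule real_sqrt_le_mono)
      then have s1: "sqrt (1 / real (Suc n)) \<le> e" using e by simp
      have s2: "sqrt (Re (ip (X n) (X n))) \<le> sqrt (d + 1 / real (Suc n))"
        using X2[of n] by simp
      have s3: "sqrt (d + 1 / real (Suc n)) \<le> sqrt d + sqrt (1 / real (Suc n))"
        using d0 by (intro sqrt_add_le_add_sqrt) auto
      have s4: "hnorm ip (X n) \<le> sqrt d + e" unfolding hnorm_def using s1 s2 s3 by linarith
      have "hnorm ip w = hnorm ip (X n + (w - X n))" by simp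
      also have "\<dots> \<le> hnorm ip (X n) + hnorm ip (w - X n)" by (rule hnorm_triangle)
      finally show ?thesis using h1 s4 by simp
    qed
    have "hnorm ip w \<le> sqrt d"
    proof (rule field_le_epsilon)
      fix e :: real assume "e > 0"
      then have "hnorm ip w \<le> sqrt d + 2 * (e/2)" using he[of "e/2"] by simp
      then show "hnorm ip w \<le> sqrt d + e" by simp
    qed
    then have "(hnorm ip w)^2 \<le> (sqrt d)^2" using hnorm_nonneg by (intro power_mono) auto
    then show ?thesis using d0 by (simp add: hnorm_sq)
  qed
  have w0: "w \<noteq> 0" using fw f0 by auto
  have orth: "ip w n = 0" if n: "f n = 0" for n
  proof (cases "n = 0")
    case True then show ?thesis by simp
  next
    case False
    define s where "s = ip w n / ip n n"
    have "f (w - sc s n) = 1" using fw n fdiff hom by simp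
    then have "d \<le> Re (ip (w - sc s n) (w - sc s n))" by (rule dle)
    also have "\<dots> = Re (ip w w) - (cmod (ip w n))^2 / Re (ip n n)"
      unfolding s_def by (rule proj_expand[OF False])
    finally have "(cmod (ip w n))^2 / Re (ip n n) \<le> 0" using wmin by simp
    moreover have "Re (ip n n) > 0" using False ip_self2[of n] ip_self_of_real[of n]
      by (metis ip_self_zero_iff less_eq_real_def of_real_0)
    ultimately have "(cmod (ip w n))^2 \<le> 0" by (simp add: divide_le_0_iff)
    then show ?thesis by simp
  qed
  have ww: "ip w w \<noteq> 0" using w0 by simp
  show ?thesis
  proof (intro exI allI)
    fix x
    have "f (x - sc (f x) w) = 0" using fdiff hom fw by simp
    then have "ip w (x - sc (f x) w) = 0" by (rule orth)
    then have "ip (x - sc (f x) w) w = 0" using ip_cnj by (metis complex_cnj_zero)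
    then have "ip x w = f x * ip w w" by (simp add: ip_simps)
    then show "f x = ip x (sc (cnj (1 / ip w w)) w)" using ww by (simp add: ip_sc_r)
  qed
qed


lemma bo_add: "bounded_op sc ip T \<Longrightarrow> T (x + y) = T x + T y" unfolding bounded_op_def by blast
lemma bo_sc: "bounded_op sc ip T \<Longrightarrow> T (sc a x) = sc a (T x)" unfolding bounded_op_def by blast
lemma bo_bnd: "bounded_op sc ip T \<Longrightarrow> \<exists>K\<ge>0. \<forall>x. hnorm ip (T x) \<le> K * hnorm ip x"
proof -
  assume "bounded_op sc ip T"
  then obtain K where K: "\<And>x. hnorm ip (T x) \<le> K * hnorm ip x" unfolding bounded_op_def by blast
  have "hnorm ip (T x) \<le> \<bar>K\<bar> * hnorm ip x" for x
    using K[of x] mult_right_mono[OF abs_ge_self hnorm_nonneg, of K x] by linarith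
  then show ?thesis by (intro exI[of _ "\<bar>K\<bar>"]) auto
qed
lemma lin_0: fixes T :: "'a::ab_group_add \<Rightarrow> 'b::ab_group_add" assumes "\<And>x y. T (x + y) = T x + T y" shows "T 0 = 0"
  using assms[of 0 0] by simp
lemma lin_neg: fixes T :: "'a::ab_group_add \<Rightarrow> 'b::ab_group_add" assumes "\<And>x y. T (x + y) = T x + T y" shows "T (- x) = - T x"
  using assms[of x "-x"] lin_0[OF assms] by (simp add: eq_neg_iff_add_eq_0 add.commute)
lemma lin_diff: fixes T :: "'a::ab_group_add \<Rightarrow> 'b::ab_group_add" assumes "\<And>x y. T (x + y) = T x + T y" shows "T (x - y) = T x - T y"
  using assms[of x "-y"] lin_neg[OF assms] by simp
lemma bo_0: "bounded_op sc ip T \<Longrightarrow> T 0 = 0" using lin_0 bo_add by blast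
lemma bo_neg: "bounded_op sc ip T \<Longrightarrow> T (- x) = - T x" using lin_neg bo_add by blast
lemma bo_diff: "bounded_op sc ip T \<Longrightarrow> T (x - y) = T x - T y" using lin_diff bo_add by blast
lemma bo_sum: "bounded_op sc ip T \<Longrightarrow> T (\<Sum>k\<in>A. f k) = (\<Sum>k\<in>A. T (f k))"
  by (induct A rule: infinite_finite_induct) (simp_all add: bo_0 bo_add)

lemma adj_exists: assumes "bounded_op sc ip T" shows "\<exists>S. \<forall>x y. ip (T x) y = ip x (S y)"
proof -
  obtain K where K: "\<And>x. hnorm ip (T x) \<le> K * hnorm ip x" "K \<ge> 0" using bo_bnd[OF assms] by blast
  have "\<exists>z. \<forall>x. ip (T x) y = ip x z" for y
  proof (rule riesz[where C = "K * hnorm ip y"])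
    show "ip (T (x + x')) y = ip (T x) y + ip (T x') y" for x x' by (simp add: bo_add[OF assms] ip_add_l)
    show "ip (T (sc a x)) y = a * ip (T x) y" for a x by (simp add: bo_sc[OF assms] ip_sc_l)
    show "cmod (ip (T x) y) \<le> K * hnorm ip y * hnorm ip x" for x
    proof -
      have "cmod (ip (T x) y) \<le> hnorm ip (T x) * hnorm ip y" by (rule cauchy_schwarz)
      also have "\<dots> \<le> K * hnorm ip x * hnorm ip y" by (intro mult_right_mono K hnorm_nonneg)
      finally show ?thesis by (simp add: algebra_simps)
    qed
  qed
  then show ?thesis by metis
qed

lemma adj_eq: assumes "\<And>x y. ip (T x) y = ip x (S y)" shows "adj ip T = S"
proof -
  have ex: "\<exists>S. \<forall>x y. ip (T x) y = ip x (S y)" using assms by blast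
  have "\<forall>x y. ip (T x) y = ip x (adj ip T y)" unfolding adj_def by (rule someI_ex[OF ex])
  then have "ip x (adj ip T y) = ip x (S y)" for x y using assms by simp
  then show ?thesis by (intro ext ip_ext_r) 
qed

lemma adj_char: "bounded_op sc ip T \<Longrightarrow> ip (T x) y = ip x (adj ip T y)"
  using adj_exists[of T] adj_eq by metis
lemma adj_char2: "bounded_op sc ip T \<Longrightarrow> ip (adj ip T x) y = ip x (T y)"
  by (metis adj_char ip_cnj)

lemma polar_zero:
  assumes add: "\<And>x y. S (x + y) = S x + S y" and hom: "\<And>a x. S (sc a x) = sc a (S x)"
    and z: "\<And>u. ip (S u) u = 0"
  shows "S u = 0"
proof -
  have E: "ip (S u) v + ip (S v) u = 0" for u v
    using z[of "u + v"] z[of u] z[of v] by (simp add: add ip_add_l ip_add_r add.commute)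
  have E2: "- \<i> * ip (S u) v + \<i> * ip (S v) u = 0" for u v
    using E[of u "sc \<i> v"] by (simp add: hom ip_sc_l ip_sc_r)
  have "ip (S u) v = 0" for v
  proof -
    have "\<i> * (ip (S u) v + ip (S v) u) - (- \<i> * ip (S u) v + \<i> * ip (S v) u) = 0"
      using E E2 by simp
    then have "2 * \<i> * ip (S u) v = 0" by (simp add: algebra_simps)
    then show ?thesis by simp
  qed
  from this[of "S u"] show ?thesis by simp
qed

lemma herm_cplx: fixes a b :: complex assumes "a + b \<in> \<real>" "- \<i> * a + \<i> * b \<in> \<real>" shows "a = cnj b"
  using assms by (auto simp: complex_eq_iff complex_is_Real_iff)

end

locale osys = hs +
  fixes V :: "('h::ab_group_add \<Rightarrow> 'h) set" and p :: "'h \<Rightarrow> 'h"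
  assumes OS: "operator_system sc ip V" and pV: "p \<in> V" and PR: "is_projection sc ip p"
begin

lemma V_bo: "x \<in> V \<Longrightarrow> bounded_op sc ip x" using OS unfolding operator_system_def by blast
lemma V_id: "id \<in> V" using OS unfolding operator_system_def by blast
lemma V_add: "x \<in> V \<Longrightarrow> y \<in> V \<Longrightarrow> (\<lambda>h. x h + y h) \<in> V" using OS unfolding operator_system_def by blast
lemma V_sc: "x \<in> V \<Longrightarrow> (\<lambda>h. sc a (x h)) \<in> V" using OS unfolding operator_system_def by blast
lemma V_adj: "x \<in> V \<Longrightarrow> adj ip x \<in> V" using OS unfolding operator_system_def by blast
lemma V_lin: "x \<in> V \<Longrightarrow> y \<in> V \<Longrightarrow> (\<lambda>h. sc a (x h) + sc b (y h)) \<in> V"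
  using V_add[OF V_sc[of x a] V_sc[of y b]] by simp
lemma V_zero: "(\<lambda>h. 0) \<in> V" using V_sc[OF V_id, of 0] by simp
lemma V_sum: fixes m :: nat shows "(\<And>k. k < m \<Longrightarrow> x k \<in> V) \<Longrightarrow> (\<lambda>h. \<Sum>k<m. sc (c k) (x k h)) \<in> V"
proof (induct m)
  case 0 then show ?case using V_zero by simp
next
  case (Suc m)
  have "(\<lambda>h. (\<lambda>h. \<Sum>k<m. sc (c k) (x k h)) h + (\<lambda>h. sc (c m) (x m h)) h) \<in> V"
    using Suc by (intro V_add V_sc) auto
  then show ?case by simp
qed

lemma p_bo: "bounded_op sc ip p" using PR unfolding is_projection_def by blast
lemma p_idem[simp]: "p (p h) = p h"
  using PR unfolding is_projection_def by (metis comp_apply)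
lemma p_adj: "adj ip p = p" using PR unfolding is_projection_def by blast
lemma p_sa: "ip (p x) y = ip x (p y)" using adj_char[OF p_bo] p_adj by simp
lemma p_add: "p (x + y) = p x + p y" by (rule bo_add[OF p_bo])
lemma p_sc: "p (sc a x) = sc a (p x)" by (rule bo_sc[OF p_bo])
lemma p_0[simp]: "p 0 = 0" by (rule bo_0[OF p_bo])
lemma p_diff: "p (x - y) = p x - p y" by (rule bo_diff[OF p_bo])
lemma p_neg: "p (- x) = - p x" by (rule bo_neg[OF p_bo])
lemma form_p: "ip (p w) u = ip (p w) (p u)"
  by (metis p_sa p_idem)

lemma adjV: "x \<in> V \<Longrightarrow> ip (x u) v = ip u (adj ip x v)" using adj_char V_bo by blast
lemma adjV2: "x \<in> V \<Longrightarrow> ip (adj ip x u) v = ip u (x v)" using adj_char2 V_bo by blast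

lemma sum_delta_if: fixes n :: nat shows "i < n \<Longrightarrow> (\<Sum>j<n. if i = j then g j else 0) = (g i :: complex)"
  by simp

lemma decomp: fixes n :: nat shows
  "(\<Sum>i<n. \<Sum>j<n. ip (x i j (h j) + (if i = j then sc (complex_of_real \<epsilon>) (p (h j)) + sc (complex_of_real t) (h j - p (h j)) else 0)) (h i))
   = (\<Sum>i<n. \<Sum>j<n. ip (x i j (h j)) (h i)) + of_real \<epsilon> * (\<Sum>i<n. ip (p (h i)) (h i))
     + of_real t * (\<Sum>i<n. ip (h i - p (h i)) (h i))"
proof -
  have "(\<Sum>i<n. \<Sum>j<n. ip (x i j (h j) + (if i = j then sc (complex_of_real \<epsilon>) (p (h j)) + sc (complex_of_real t) (h j - p (h j)) else 0)) (h i))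
    = (\<Sum>i<n. (\<Sum>j<n. ip (x i j (h j)) (h i)) + (\<Sum>j<n. if i = j then ip (sc (complex_of_real \<epsilon>) (p (h j)) + sc (complex_of_real t) (h j - p (h j))) (h i) else 0))"
    by (intro sum.cong refl) (simp add: ip_add_l sum.distrib if_distrib[of "\<lambda>z. ip z _"] cong: if_cong)
  also have "\<dots> = (\<Sum>i<n. (\<Sum>j<n. ip (x i j (h j)) (h i)) + (of_real \<epsilon> * ip (p (h i)) (h i) + of_real t * ip (h i - p (h i)) (h i)))"
    by (intro sum.cong refl) (simp add: ip_add_l ip_sc_l)
  finally show ?thesis by (simp add: sum.distrib sum_distrib_left)
qed

lemma herm_real: fixes n :: nat
  assumes "\<And>i j u v. i < n \<Longrightarrow> j < n \<Longrightarrow> ip (N i j u) v = ip u (N j i v)"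
  shows "(\<Sum>i<n. \<Sum>j<n. ip (N i j (h j)) (h i)) \<in> \<real>"
proof -
  have "cnj (\<Sum>i<n. \<Sum>j<n. ip (N i j (h j)) (h i)) = (\<Sum>i<n. \<Sum>j<n. ip (h i) (N i j (h j)))"
    by (simp add: ip_cnj[of "h _"])
  also have "\<dots> = (\<Sum>i<n. \<Sum>j<n. ip (N j i (h i)) (h j))"
    using assms by (intro sum.cong refl) simp
  also have "\<dots> = (\<Sum>i<n. \<Sum>j<n. ip (N i j (h j)) (h i))"
    by (rule sum.swap)
  finally show ?thesis using Reals_cnj_iff by blast
qed

lemma inCp_compr:
  assumes "inCp sc ip V p n x"
  shows "compr_pos ip p n (\<lambda>i j. p \<circ> x i j \<circ> p)"
  unfolding compr_pos_def
proof (intro allI impI)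
  fix h :: "nat \<Rightarrow> 'h" assume hr: "\<forall>j<n. h j \<in> range p"
  have ph: "p (h j) = h j" if "j < n" for j using hr that by auto
  define F where "F = (\<Sum>i<n. \<Sum>j<n. ip (x i j (h j)) (h i))"
  define P where "P = (\<Sum>i<n. ip (h i) (h i))"
  have "(\<Sum>i<n. \<Sum>j<n. ip ((p \<circ> x i j \<circ> p) (h j)) (h i)) = F"
    unfolding F_def by (intro sum.cong refl) (simp add: ph p_sa)
  moreover
  have S: "F + of_real e * P \<in> \<real> \<and> Re (F + of_real e * P) \<ge> 0" if e: "e > 0" for e
  proof -
    obtain t where t: "mat_pos ip n (\<lambda>i j h. x i j h + (if i = j then sc (complex_of_real e) (p h) + sc (complex_of_real t) (h - p h) else 0))"
      using assms e unfolding inCp_def by blast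
    have "(\<Sum>i<n. ip (h i - p (h i)) (h i)) = 0" by (intro sum.neutral) (simp add: ph)
    moreover have "(\<Sum>i<n. ip (p (h i)) (h i)) = P" unfolding P_def by (intro sum.cong refl) (simp add: ph)
    ultimately show ?thesis using t[unfolded mat_pos_def, rule_format, of h] decomp[where x=x and \<epsilon>=e and t=t and h=h and n=n]
      unfolding F_def by simp
  qed
  have PR: "P \<in> \<real>" "Re P \<ge> 0" unfolding P_def using ip_self by (auto intro: sum_nonneg)
  have FR: "F \<in> \<real>"
  proof -
    have "F = (F + of_real 1 * P) - P" by simp
    moreover have "F + of_real 1 * P \<in> \<real>" using S[of 1] by simp
    ultimately show ?thesis using PR by (metis Reals_diff)
  qed
  have "- Re F \<le> Re P * e" if "e > 0" for e
  proof -
    have "0 \<le> Re F + e * Re P" using S[OF that] by simp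
    then show ?thesis by (simp add: mult.commute)
  qed
  then have "- Re F \<le> 0" using PR by (intro le_eps_zero[of "Re P"]) auto
  ultimately show "(\<Sum>i<n. \<Sum>j<n. ip ((p \<circ> x i j \<circ> p) (h j)) (h i)) \<in> \<real> \<and>
        0 \<le> Re (\<Sum>i<n. \<Sum>j<n. ip ((p \<circ> x i j \<circ> p) (h j)) (h i))" using FR by simp
qed


lemma amgm: fixes a b d :: real assumes "d > 0" shows "a * b \<le> (d * b^2 + a^2 / d) / 2"
proof -
  have "0 \<le> (d * b - a)^2" by simp
  then have h: "a * b * (2 * d) \<le> d^2 * b^2 + a^2" by (simp add: power2_eq_square algebra_simps)
  have eq: "(d * b^2 + a^2 / d) / 2 = (d^2*b^2 + a^2) / (2*d)" using assms by (simp add: field_simps power2_eq_square)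
  have "a * b \<le> (d^2*b^2 + a^2) / (2*d)" using assms h by (subst pos_le_divide_eq) auto
  then show ?thesis unfolding eq .
qed

lemma sum_lemma: fixes A B :: "nat \<Rightarrow> real" and n :: nat
  shows "(\<Sum>i<n. \<Sum>j<n. K * ((d * A i + B j / d) / 2)) = K * real n * (d * (\<Sum>i<n. A i) + (\<Sum>j<n. B j) / d) / 2"
  by (simp add: sum.distrib sum_distrib_left sum_divide_distrib[symmetric] algebra_simps)

lemma bound_form: fixes n :: nat
  assumes K: "K \<ge> 0" and xb: "\<And>i j u. i < n \<Longrightarrow> j < n \<Longrightarrow> hnorm ip (x i j u) \<le> K * hnorm ip u"
    and d: "d > 0"
  shows "cmod (\<Sum>i<n. \<Sum>j<n. ip (x i j (u j)) (v i))
    \<le> K * real n * (d * (\<Sum>i<n. Re (ip (v i) (v i))) + (\<Sum>j<n. Re (ip (u j) (u j))) / d) / 2"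
proof -
  have "cmod (\<Sum>i<n. \<Sum>j<n. ip (x i j (u j)) (v i)) \<le> (\<Sum>i<n. cmod (\<Sum>j<n. ip (x i j (u j)) (v i)))"
    by (rule norm_sum)
  also have "\<dots> \<le> (\<Sum>i<n. \<Sum>j<n. cmod (ip (x i j (u j)) (v i)))"
    by (intro sum_mono norm_sum)
  also have "\<dots> \<le> (\<Sum>i<n. \<Sum>j<n. K * ((d * Re (ip (v i) (v i)) + Re (ip (u j) (u j)) / d) / 2))"
  proof (intro sum_mono)
    fix i j assume ij: "i \<in> {..<n}" "j \<in> {..<n}"
    have "cmod (ip (x i j (u j)) (v i)) \<le> hnorm ip (x i j (u j)) * hnorm ip (v i)" by (rule cauchy_schwarz)
    also have "\<dots> \<le> K * hnorm ip (u j) * hnorm ip (v i)"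
      using ij by (intro mult_right_mono xb hnorm_nonneg) auto
    also have "\<dots> = K * (hnorm ip (u j) * hnorm ip (v i))" by simp
    also have "\<dots> \<le> K * ((d * (hnorm ip (v i))^2 + (hnorm ip (u j))^2 / d) / 2)"
      using K d by (intro mult_left_mono amgm) auto
    finally show "cmod (ip (x i j (u j)) (v i)) \<le> K * ((d * Re (ip (v i) (v i)) + Re (ip (u j) (u j)) / d) / 2)"
      by (simp add: hnorm_sq)
  qed
  also have "\<dots> = K * real n * (d * (\<Sum>i<n. Re (ip (v i) (v i))) + (\<Sum>j<n. Re (ip (u j) (u j))) / d) / 2"
    by (rule sum_lemma)
  finally show ?thesis .
qed


lemma qp_orth: "ip (h - p h) (p h) = 0"
  using form_p[of h h] p_sa[of h h] by (simp add: ip_diff_l)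

lemma compr_inCp: fixes n :: nat
  assumes xV: "\<And>i j. i < n \<Longrightarrow> j < n \<Longrightarrow> x i j \<in> V"
    and herm: "\<And>i j u v. i < n \<Longrightarrow> j < n \<Longrightarrow> ip (x i j u) v = ip u (x j i v)"
    and cp: "compr_pos ip p n (\<lambda>i j. p \<circ> x i j \<circ> p)"
  shows "inCp sc ip V p n x"
  unfolding inCp_def
proof (intro conjI allI impI)
  show "x i j \<in> V" if "i < n" "j < n" for i j using xV that by blast
  show "x j i = adj ip (x i j)" if "i < n" "j < n" for i j
    using adj_eq[of "x i j" "x j i"] herm that by simp
  have "\<forall>a\<in>{..<n} \<times> {..<n}. \<exists>K. K \<ge> 0 \<and> (\<forall>u. hnorm ip (x (fst a) (snd a) u) \<le> K * hnorm ip u)"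
    using bo_bnd V_bo xV by auto
  then obtain Kf where Kf: "\<And>a. a \<in> {..<n} \<times> {..<n} \<Longrightarrow> Kf a \<ge> 0 \<and> (\<forall>u. hnorm ip (x (fst a) (snd a) u) \<le> Kf a * hnorm ip u)"
    by (metis bchoice)
  define K where "K = (\<Sum>a\<in>{..<n} \<times> {..<n}. Kf a)"
  have K0: "K \<ge> 0" unfolding K_def using Kf by (intro sum_nonneg) auto
  have xb: "hnorm ip (x i j u) \<le> K * hnorm ip u" if ij: "i < n" "j < n" for i j u
  proof -
    have "Kf (i, j) \<le> K" unfolding K_def using Kf ij by (intro member_le_sum) auto
    then have "Kf (i,j) * hnorm ip u \<le> K * hnorm ip u" by (intro mult_right_mono hnorm_nonneg)
    moreover have "hnorm ip (x i j u) \<le> Kf (i,j) * hnorm ip u" using Kf[of "(i,j)"] ij by auto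
    ultimately show ?thesis by linarith
  qed
  fix \<epsilon> :: real assume e: "\<epsilon> > 0"
  define c where "c = K * real n"
  have c0: "c \<ge> 0" unfolding c_def using K0 by simp
  define \<delta> where "\<delta> = \<epsilon> / (c + 1)"
  have d0: "\<delta> > 0" unfolding \<delta>_def using e c0 by simp
  have cd: "c * \<delta> \<le> \<epsilon>"
  proof -
    have "c * \<delta> = \<epsilon> * (c / (c + 1))" unfolding \<delta>_def by simp
    also have "\<dots> \<le> \<epsilon> * 1" using e c0 by (intro mult_left_mono) auto
    finally show ?thesis by simp
  qed
  define t where "t = c / \<delta> + c + 1"
  have t0: "t > 0" unfolding t_def using c0 d0 by (simp add: add_nonneg_pos)
  have "mat_pos ip n (\<lambda>i j h. x i j h + (if i = j then sc (complex_of_real \<epsilon>) (p h) + sc (complex_of_real t) (h - p h) else 0))"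
    unfolding mat_pos_def
  proof (intro allI)
    fix h :: "nat \<Rightarrow> 'h"
    define a where "a j = p (h j)" for j
    define b where "b j = h j - p (h j)" for j
    have hab: "h j = a j + b j" for j unfolding a_def b_def by simp
    define P where "P = (\<Sum>i<n. Re (ip (a i) (a i)))"
    define Q where "Q = (\<Sum>i<n. Re (ip (b i) (b i)))"
    have P0: "P \<ge> 0" unfolding P_def using ip_self2 by (intro sum_nonneg) auto
    have Q0: "Q \<ge> 0" unfolding Q_def using ip_self2 by (intro sum_nonneg) auto
    have SP: "(\<Sum>i<n. ip (p (h i)) (h i)) = of_real P"
    proof -
      have "(\<Sum>i<n. ip (p (h i)) (h i)) = (\<Sum>i<n. of_real (Re (ip (a i) (a i))))"
        unfolding a_def by (intro sum.cong refl) (metis form_p ip_self_of_real)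
      then show ?thesis unfolding P_def by simp
    qed
    have SQ: "(\<Sum>i<n. ip (h i - p (h i)) (h i)) = of_real Q"
    proof -
      have "ip (b i) (h i) = ip (b i) (b i)" for i
      proof -
        have "ip (b i) (h i) = ip (b i) (a i + b i)" using hab[of i] by simp
        also have "\<dots> = ip (b i) (a i) + ip (b i) (b i)" by (rule ip_add_r)
        also have "ip (b i) (a i) = 0" unfolding a_def b_def by (rule qp_orth)
        finally show ?thesis by simp
      qed
      then have "(\<Sum>i<n. ip (h i - p (h i)) (h i)) = (\<Sum>i<n. of_real (Re (ip (b i) (b i))))"
        unfolding b_def by (intro sum.cong refl) (metis ip_self_of_real)
      then show ?thesis unfolding Q_def by simp
    qed
    define G where "G u v = (\<Sum>i<n. \<Sum>j<n. ip (x i j (u j)) (v i))" for u v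
    have Gsplit: "G h h = G a a + G b a + G a b + G b b"
    proof -
      have "G h h = (\<Sum>i<n. \<Sum>j<n. ip (x i j (a j)) (a i) + ip (x i j (b j)) (a i) + ip (x i j (a j)) (b i) + ip (x i j (b j)) (b i))"
        unfolding G_def
        by (intro sum.cong refl) (simp add: hab[of "_"] bo_add[OF V_bo[OF xV]] ip_add_l ip_add_r)
      then show ?thesis unfolding G_def by (simp add: sum.distrib)
    qed
    have GR: "G h h \<in> \<real>" unfolding G_def by (rule herm_real) (rule herm)
    have Gaa: "Re (G a a) \<ge> 0"
    proof -
      have "G a a = (\<Sum>i<n. \<Sum>j<n. ip ((p \<circ> x i j \<circ> p) (a j)) (a i))"
        unfolding G_def a_def by (intro sum.cong refl) (simp add: p_sa)
      moreover have "\<forall>j<n. a j \<in> range p" unfolding a_def by auto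
      ultimately show ?thesis using cp unfolding compr_pos_def by simp
    qed
    have B1: "cmod (G b a) \<le> c * (\<delta> * P + Q / \<delta>) / 2"
      unfolding G_def c_def P_def Q_def by (rule bound_form[OF K0 xb d0])
    have B2: "cmod (G a b) \<le> c * ((1/\<delta>) * Q + P / (1/\<delta>)) / 2"
      unfolding G_def c_def P_def Q_def by (rule bound_form[OF K0 xb]) (use d0 in auto)
    have B3: "cmod (G b b) \<le> c * (1 * Q + Q / 1) / 2"
      unfolding G_def c_def P_def Q_def by (rule bound_form[OF K0 xb]) auto
    have sumB: "c * (\<delta> * P + Q / \<delta>) / 2 + c * ((1/\<delta>) * Q + P / (1/\<delta>)) / 2 + c * (1 * Q + Q / 1) / 2
       = c * \<delta> * P + c * Q / \<delta> + c * Q"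
      using d0 by (simp add: field_simps)
    have ReG: "Re (G h h) \<ge> - (c * \<delta> * P + c * Q / \<delta> + c * Q)"
    proof -
      have "Re (G h h) = Re (G a a) + Re (G b a) + Re (G a b) + Re (G b b)" using Gsplit by simp
      moreover have "- cmod (G b a) \<le> Re (G b a)" "- cmod (G a b) \<le> Re (G a b)" "- cmod (G b b) \<le> Re (G b b)"
        using abs_Re_le_cmod by (metis abs_le_iff minus_le_iff)+
      ultimately show ?thesis using Gaa B1 B2 B3 sumB by linarith
    qed
    have fin: "\<epsilon> * P + t * Q - (c * \<delta> * P + c * Q / \<delta> + c * Q) = (\<epsilon> - c * \<delta>) * P + Q"
      unfolding t_def by (simp add: algebra_simps)
    have "(\<epsilon> - c * \<delta>) * P \<ge> 0" using cd P0 by simp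
    then have ReS: "Re (G h h) + \<epsilon> * P + t * Q \<ge> 0" using ReG fin Q0 by linarith
    have eqS: "(\<Sum>i<n. \<Sum>j<n. ip (x i j (h j) + (if i = j then sc (complex_of_real \<epsilon>) (p (h j)) + sc (complex_of_real t) (h j - p (h j)) else 0)) (h i))
      = G h h + of_real \<epsilon> * of_real P + of_real t * of_real Q"
      using decomp[where x=x and \<epsilon>=\<epsilon> and t=t and h=h and n=n] SP SQ unfolding G_def by simp
    show "(\<Sum>i<n. \<Sum>j<n. ip (x i j (h j) + (if i = j then sc (complex_of_real \<epsilon>) (p (h j)) + sc (complex_of_real t) (h j - p (h j)) else 0)) (h i)) \<in> \<real> \<and>
          0 \<le> Re (\<Sum>i<n. \<Sum>j<n. ip (x i j (h j) + (if i = j then sc (complex_of_real \<epsilon>) (p (h j)) + sc (complex_of_real t) (h j - p (h j)) else 0)) (h i))"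
      unfolding eqS using GR ReS by (simp del: of_real_mult)
  qed
  then show "\<exists>t>0. mat_pos ip n (\<lambda>i j h. x i j h + (if i = j then sc (complex_of_real \<epsilon>) (p h) + sc (complex_of_real t) (h - p h) else 0))"
    using t0 by blast
qed


lemma ip_ext_l: assumes "\<And>v. ip a v = ip b v" shows "a = b"
  using assms by (intro ip_ext_r) (metis ip_cnj)

lemma C1_zero:
  assumes a1: "a \<in> Cp1 sc ip V p" and a2: "(\<lambda>h. - a h) \<in> Cp1 sc ip V p"
  shows "a \<in> V \<and> (\<forall>h. p (a (p h)) = 0)"
proof -
  have ia: "inCp sc ip V p 1 (\<lambda>_ _. a)" using a1 unfolding Cp1_def by simp
  have ib: "inCp sc ip V p 1 (\<lambda>_ _ h. - a h)" using a2 unfolding Cp1_def by simp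
  have aV: "a \<in> V" using ia unfolding inCp_def by auto
  have ca: "compr_pos ip p 1 (\<lambda>i j. p \<circ> a \<circ> p)" using inCp_compr[OF ia] by simp
  have cb: "compr_pos ip p 1 (\<lambda>i j. p \<circ> (\<lambda>h. - a h) \<circ> p)" using inCp_compr[OF ib] by simp
  have z: "ip (p (a (p w))) w = 0" if w: "w \<in> range p" for w
  proof -
    define z where "z = ip (p (a (p w))) w"
    have "z \<in> \<real> \<and> Re z \<ge> 0" using ca[unfolded compr_pos_def, rule_format, of "\<lambda>_. w"] w
      unfolding z_def by simp
    moreover have "Re (- z) \<ge> 0" using cb[unfolded compr_pos_def, rule_format, of "\<lambda>_. w"] w
      unfolding z_def by (simp add: p_neg ip_neg_l)
    ultimately have "z = 0" by (auto simp: complex_eq_iff complex_is_Real_iff)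
    then show ?thesis unfolding z_def .
  qed
  have "p (a (p u)) = 0" for u
  proof (rule polar_zero[where S = "\<lambda>u. p (a (p u))"])
    show "p (a (p (x + y))) = p (a (p x)) + p (a (p y))" for x y
      by (simp add: p_add bo_add[OF V_bo[OF aV]])
    show "p (a (p (sc c x))) = sc c (p (a (p x)))" for c x
      by (simp add: p_sc bo_sc[OF V_bo[OF aV]])
    show "ip (p (a (p u))) u = 0" for u
    proof -
      have "ip (p (a (p u))) u = ip (p (a (p (p u)))) (p u)" using form_p by simp
      also have "\<dots> = 0" by (rule z) simp
      finally show ?thesis .
    qed
  qed
  then show ?thesis using aV by blast
qed

lemma J_sub: "x \<in> Jp sc ip V p \<Longrightarrow> x \<in> V \<and> (\<forall>h. p (x (p h)) = 0)"
proof -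
  assume "x \<in> Jp sc ip V p"
  then obtain m c xk where xk: "\<And>k. k < m \<Longrightarrow> xk k \<in> Cp1 sc ip V p \<inter> {a. (\<lambda>h. - a h) \<in> Cp1 sc ip V p}"
    and x: "x = (\<lambda>h. \<Sum>k<(m::nat). sc (c k) (xk k h))"
    unfolding Jp_def cspan_def by blast
  have xkV: "xk k \<in> V \<and> (\<forall>h. p (xk k (p h)) = 0)" if "k < m" for k using xk[OF that] C1_zero by blast
  have "x \<in> V" unfolding x using xkV by (intro V_sum) auto
  moreover have "p (x (p h)) = 0" for h
    unfolding x using xkV by (simp add: bo_sum[OF p_bo] p_sc)
  ultimately show ?thesis by blast
qed

lemma V_neg: "a \<in> V \<Longrightarrow> (\<lambda>h. - a h) \<in> V"
  using V_sc[of a "-1"] by (simp add: sc_neg_l)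

lemma C1_of_ker:
  assumes aV: "a \<in> V" and sa: "\<And>u v. ip (a u) v = ip u (a v)" and k: "\<And>h. p (a (p h)) = 0"
  shows "a \<in> Cp1 sc ip V p \<inter> {a. (\<lambda>h. - a h) \<in> Cp1 sc ip V p}"
proof -
  have gen: "b \<in> Cp1 sc ip V p" if bV: "b \<in> V" and sb: "\<And>u v. ip (b u) v = ip u (b v)" and kb: "\<And>h. p (b (p h)) = 0" for b
  proof -
    have "inCp sc ip V p 1 (\<lambda>_ _. b)"
    proof (rule compr_inCp)
      show "compr_pos ip p 1 (\<lambda>i j. p \<circ> b \<circ> p)" unfolding compr_pos_def by (simp add: kb)
    qed (use bV sb in auto)
    then show ?thesis unfolding Cp1_def by simp
  qed
  have "a \<in> Cp1 sc ip V p" using gen aV sa k by blast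
  moreover have "(\<lambda>h. - a h) \<in> Cp1 sc ip V p"
    using gen[of "\<lambda>h. - a h"] V_neg[OF aV] sa k by (simp add: ip_neg_l ip_neg_r p_neg)
  ultimately show ?thesis by blast
qed

lemma sc_half_recombine: "sc 1 (sc (1/2) y + sc (1/2) z) + sc \<i> (sc (- \<i>/2) y + sc (\<i>/2) z) = y"
proof -
  have "sc \<i> (sc (- \<i>/2) y + sc (\<i>/2) z) = sc (1/2) y + sc (-(1/2)) z"
    by (simp add: sc_add_r sc_assoc)
  then have "sc 1 (sc (1/2) y + sc (1/2) z) + sc \<i> (sc (- \<i>/2) y + sc (\<i>/2) z)
      = (sc (1/2) y + sc (1/2) y) + (sc (1/2) z + sc (-(1/2)) z)" by (simp add: algebra_simps)
  also have "\<dots> = sc (1/2 + 1/2) y + sc (1/2 + (-(1/2))) z" by (simp only: sc_add_l)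
  finally show ?thesis by simp
qed

lemma ker_sub_J:
  assumes xV: "x \<in> V" and k: "\<And>h. p (x (p h)) = 0"
  shows "x \<in> Jp sc ip V p"
proof -
  define xs where "xs = adj ip x"
  have xsV: "xs \<in> V" unfolding xs_def by (rule V_adj[OF xV])
  have a1: "ip (x u) v = ip u (xs v)" for u v unfolding xs_def by (rule adjV[OF xV])
  have a2: "ip (xs u) v = ip u (x v)" for u v unfolding xs_def by (rule adjV2[OF xV])
  have ks: "p (xs (p h)) = 0" for h
  proof -
    have "ip (p (xs (p h))) v = 0" for v
    proof -
      have "ip (p (xs (p h))) v = ip (xs (p h)) (p v)" by (rule p_sa)
      also have "\<dots> = ip (p h) (x (p v))" by (rule a2)
      also have "\<dots> = ip h (p (x (p v)))" by (rule p_sa)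
      finally show ?thesis using k by simp
    qed
    from this[of "p (xs (p h))"] show ?thesis by simp
  qed
  define r where "r = (\<lambda>h. sc (1/2) (x h) + sc (1/2) (xs h))"
  define s where "s = (\<lambda>h. sc (- \<i>/2) (x h) + sc (\<i>/2) (xs h))"
  have rV: "r \<in> V" unfolding r_def by (rule V_lin[OF xV xsV])
  have sV: "s \<in> V" unfolding s_def by (rule V_lin[OF xV xsV])
  have rsa: "ip (r u) v = ip u (r v)" for u v
    unfolding r_def by (simp add: ip_simps a1 a2 algebra_simps)
  have ssa: "ip (s u) v = ip u (s v)" for u v
    unfolding s_def by (simp add: ip_simps a1 a2 algebra_simps)
  have rk: "p (r (p h)) = 0" for h unfolding r_def by (simp add: p_add p_sc k ks)
  have sk: "p (s (p h)) = 0" for h unfolding s_def by (simp add: p_add p_sc k ks)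
  have rC: "r \<in> Cp1 sc ip V p \<inter> {a. (\<lambda>h. - a h) \<in> Cp1 sc ip V p}" by (rule C1_of_ker[OF rV rsa rk])
  have sC: "s \<in> Cp1 sc ip V p \<inter> {a. (\<lambda>h. - a h) \<in> Cp1 sc ip V p}" by (rule C1_of_ker[OF sV ssa sk])
  define c :: "nat \<Rightarrow> complex" where "c k = (if k = 0 then 1 else \<i>)" for k
  define xk where "xk k = (if k = 0 then r else s)" for k :: nat
  have "x = (\<lambda>h. \<Sum>k<(2::nat). sc (c k) (xk k h))"
  proof
    fix h
    have "(\<Sum>k<(2::nat). sc (c k) (xk k h)) = sc 1 (r h) + sc \<i> (s h)"
      by (simp add: numeral_2_eq_2 c_def xk_def)
    also have "\<dots> = x h" unfolding r_def s_def by (rule sc_half_recombine)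
    finally show "x h = (\<Sum>k<(2::nat). sc (c k) (xk k h))" by simp
  qed
  moreover have "\<forall>k<(2::nat). xk k \<in> Cp1 sc ip V p \<inter> {a. (\<lambda>h. - a h) \<in> Cp1 sc ip V p}"
    using rC sC by (simp add: xk_def)
  ultimately show ?thesis unfolding Jp_def cspan_def by blast
qed

lemma J_char: "j \<in> Jp sc ip V p \<longleftrightarrow> j \<in> V \<and> (\<forall>h. p (j (p h)) = 0)"
  using J_sub ker_sub_J by blast


lemma J_zero: "(\<lambda>h. 0) \<in> Jp sc ip V p" using J_char V_zero by simp

lemma coset_self: "x \<in> coset (Jp sc ip V p) x"
  unfolding coset_def using J_zero by force

lemma coset_eq_imp:
  assumes "coset (Jp sc ip V p) x = coset (Jp sc ip V p) y"
  shows "p (x (p h)) = p (y (p h))"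
proof -
  have "x \<in> coset (Jp sc ip V p) y" using coset_self[of x] assms by simp
  then obtain j where j: "j \<in> Jp sc ip V p" and xj: "x = (\<lambda>h. y h + j h)" unfolding coset_def by blast
  show ?thesis using J_char j unfolding xj by (simp add: p_add)
qed

lemma coset_eq_if:
  assumes xV: "x \<in> V" and yV: "y \<in> V" and e: "\<And>h. p (x (p h)) = p (y (p h))"
  shows "coset (Jp sc ip V p) x = coset (Jp sc ip V p) y"
proof -
  have sub: "coset (Jp sc ip V p) x \<subseteq> coset (Jp sc ip V p) y"
    if xV: "x \<in> V" and yV: "y \<in> V" and e: "\<And>h. p (x (p h)) = p (y (p h))" for x y
  proof
    fix z assume "z \<in> coset (Jp sc ip V p) x"
    then obtain j where j: "j \<in> Jp sc ip V p" and z: "z = (\<lambda>h. x h + j h)" unfolding coset_def by blast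
    define j' where "j' = (\<lambda>h. (\<lambda>h. x h + (- y h)) h + j h)"
    have jV: "j \<in> V" "\<forall>h. p (j (p h)) = 0" using j J_char by auto
    have "j' \<in> V" unfolding j'_def by (intro V_add V_neg xV yV jV)
    moreover have "p (j' (p h)) = 0" for h unfolding j'_def using jV e[of h] by (simp add: p_add p_neg p_diff)
    ultimately have "j' \<in> Jp sc ip V p" using J_char by blast
    moreover have "z = (\<lambda>h. y h + j' h)" unfolding z j'_def by (simp add: algebra_simps)
    ultimately show "z \<in> coset (Jp sc ip V p) y" unfolding coset_def by blast
  qed
  show ?thesis using sub[OF xV yV e] sub[OF yV xV] e by (metis subset_antisym)
qed

definition Phi :: "('h \<Rightarrow> 'h) set \<Rightarrow> ('h \<Rightarrow> 'h)" where
  "Phi C = p \<circ> (SOME x. x \<in> V \<and> C = coset (Jp sc ip V p) x) \<circ> p"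

lemma Phi_coset: assumes yV: "y \<in> V" shows "Phi (coset (Jp sc ip V p) y) = p \<circ> y \<circ> p"
proof -
  define x where "x = (SOME x. x \<in> V \<and> coset (Jp sc ip V p) y = coset (Jp sc ip V p) x)"
  have "x \<in> V \<and> coset (Jp sc ip V p) y = coset (Jp sc ip V p) x"
    unfolding x_def by (rule someI[of _ y]) (use yV in simp)
  then have "p (x (p h)) = p (y (p h))" for h using coset_eq_imp by metis
  then show ?thesis unfolding Phi_def x_def[symmetric] by (simp add: fun_eq_iff)
qed

lemma compr_pos_cong:
  assumes "\<And>i j. i < n \<Longrightarrow> j < n \<Longrightarrow> M i j = M' i j"
  shows "compr_pos ip p n M = compr_pos ip p n M'"
proof -
  have "(\<Sum>i<n. \<Sum>j<n. ip (M i j (h j)) (h i)) = (\<Sum>i<n. \<Sum>j<n. ip (M' i j (h j)) (h i))" for h :: "nat \<Rightarrow> 'h"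
    using assms by (intro sum.cong refl) simp
  then show ?thesis unfolding compr_pos_def by simp
qed

lemma B_delta: fixes n :: nat
  assumes "i0 < n" "j0 < n" and M0: "\<And>i j. M i j 0 = 0"
  shows "(\<Sum>i<n. \<Sum>j<n. ip (M i j (if j = j0 then u else 0)) (if i = i0 then v else 0)) = ip (M i0 j0 u) v"
proof -
  have pt: "ip (M i j (if j = j0 then u else 0)) (if i = i0 then v else 0)
     = (if j = j0 then (if i = i0 then ip (M i j u) v else 0) else 0)" for i j
    by (simp add: M0)
  show ?thesis using assms by (simp add: pt)
qed

lemma herm_from_pos: fixes n :: nat
  assumes yV: "\<And>i j. i < n \<Longrightarrow> j < n \<Longrightarrow> y i j \<in> V"
    and cp: "compr_pos ip p n (\<lambda>i j. p \<circ> y i j \<circ> p)"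
    and ij: "i0 < n" "j0 < n"
  shows "ip (p (y i0 j0 (p u))) v = ip u (p (y j0 i0 (p v)))"
proof -
  define M where "M i j = (if i < n \<and> j < n then p \<circ> y i j \<circ> p else (\<lambda>_. 0))" for i j
  have Madd: "M i j (a + b) = M i j a + M i j b" for i j a b
    unfolding M_def using yV by (simp add: p_add bo_add[OF V_bo])
  have Msc: "M i j (sc c a) = sc c (M i j a)" for i j c a
    unfolding M_def using yV by (simp add: p_sc bo_sc[OF V_bo])
  have M0: "M i j 0 = 0" for i j using Madd[of i j 0 0] by simp
  have cpM: "compr_pos ip p n M" using cp by (subst compr_pos_cong[of n M "\<lambda>i j. p \<circ> y i j \<circ> p"]) (simp_all add: M_def)
  define B where "B h k = (\<Sum>i<n. \<Sum>j<n. ip (M i j (h j)) (k i))" for h k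
  have Qr: "B h h \<in> \<real>" if "\<forall>j. h j \<in> range p" for h
    using cpM that unfolding compr_pos_def B_def by blast
  have Badd: "B (\<lambda>j. h j + k j) (\<lambda>j. h j + k j) = B h h + B h k + B k h + B k k" for h k
    unfolding B_def by (simp add: Madd ip_add_l ip_add_r sum.distrib algebra_simps)
  have Bi1: "B (\<lambda>j. sc \<i> (k j)) h = \<i> * B k h" for h k
    unfolding B_def by (simp add: Msc ip_sc_l sum_distrib_left)
  have Bi2: "B h (\<lambda>j. sc \<i> (k j)) = - \<i> * B h k" for h k
    unfolding B_def by (simp add: ip_sc_r sum_distrib_left)
  have rng_add: "\<forall>j. h j + k j \<in> range p" if hr: "\<forall>j. h j \<in> range p" and kr: "\<forall>j. k j \<in> range p" for h k
  proof
    fix j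
    obtain a b where "h j = p a" "k j = p b" using hr kr by blast
    then show "h j + k j \<in> range p" by (metis p_add rangeI)
  qed
  have rng_i: "\<forall>j. sc \<i> (k j) \<in> range p" if kr: "\<forall>j. k j \<in> range p" for k
  proof
    fix j
    obtain b where "k j = p b" using kr by blast
    then show "sc \<i> (k j) \<in> range p" by (metis p_sc rangeI)
  qed
  have herm: "B h k = cnj (B k h)" if h: "\<forall>j. h j \<in> range p" and k: "\<forall>j. k j \<in> range p" for h k
  proof (rule herm_cplx)
    have e1: "B h k + B k h = B (\<lambda>j. h j + k j) (\<lambda>j. h j + k j) - B h h - B k k" using Badd[of h k] by simp
    have r1: "B (\<lambda>j. h j + k j) (\<lambda>j. h j + k j) \<in> \<real>" by (rule Qr[OF rng_add[OF h k]])
    show "B h k + B k h \<in> \<real>" unfolding e1 by (intro Reals_diff r1 Qr h k)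
    define k' where "k' = (\<lambda>j. sc \<i> (k j))"
    have k': "\<forall>j. k' j \<in> range p" unfolding k'_def using rng_i k by blast
    have e2: "- \<i> * B h k + \<i> * B k h = B (\<lambda>j. h j + k' j) (\<lambda>j. h j + k' j) - B h h - B k' k'"
      using Badd[of h k'] unfolding k'_def by (simp add: Bi1 Bi2)
    have r2: "B (\<lambda>j. h j + k' j) (\<lambda>j. h j + k' j) \<in> \<real>" by (rule Qr[OF rng_add[OF h k']])
    show "- \<i> * B h k + \<i> * B k h \<in> \<real>" unfolding e2 by (intro Reals_diff r2 Qr h k')
  qed
  define hh where "hh = (\<lambda>j. if j = j0 then p u else 0)"
  define kk where "kk = (\<lambda>i. if i = i0 then p v else 0)"
  have hr: "\<forall>j. hh j \<in> range p" unfolding hh_def by (metis p_0 rangeI)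
  have kr: "\<forall>j. kk j \<in> range p" unfolding kk_def by (metis p_0 rangeI)
  have "B hh kk = ip (M i0 j0 (p u)) (p v)" unfolding B_def hh_def kk_def by (rule B_delta[where M=M, OF ij M0])
  moreover have "B kk hh = ip (M j0 i0 (p v)) (p u)" unfolding B_def hh_def kk_def by (rule B_delta[where M=M, OF ij(2,1) M0])
  ultimately have "ip (M i0 j0 (p u)) (p v) = cnj (ip (M j0 i0 (p v)) (p u))" using herm[OF hr kr] by simp
  then have "ip (p (y i0 j0 (p u))) (p v) = ip (p u) (p (y j0 i0 (p v)))"
    using ij by (simp add: M_def ip_cnj[of "p u"])
  then show ?thesis by (metis form_p p_sa p_idem)
qed


lemma main:
  "bij_betw Phi (quot V (Jp sc ip V p)) ((\<lambda>x. p \<circ> x \<circ> p) ` V) \<and>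
     (\<forall>a. \<forall>x\<in>V. \<forall>y\<in>V. Phi (coset (Jp sc ip V p) (\<lambda>h. sc a (x h) + y h)) =
          (\<lambda>h. sc a (Phi (coset (Jp sc ip V p) x) h) + Phi (coset (Jp sc ip V p) y) h)) \<and>
     Phi (coset (Jp sc ip V p) p) = p \<and>
     (\<forall>n\<ge>1. \<forall>Y. (\<forall>i<n. \<forall>j<n. Y i j \<in> quot V (Jp sc ip V p)) \<longrightarrow>
        (inCtilde sc ip V p n Y \<longleftrightarrow> compr_pos ip p n (\<lambda>i j. Phi (Y i j))))"
proof (intro conjI allI ballI impI)
  show "bij_betw Phi (quot V (Jp sc ip V p)) ((\<lambda>x. p \<circ> x \<circ> p) ` V)"
    unfolding bij_betw_def
  proof
    show "inj_on Phi (quot V (Jp sc ip V p))"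
    proof (rule inj_onI)
      fix C1 C2 assume c1: "C1 \<in> quot V (Jp sc ip V p)" and c2: "C2 \<in> quot V (Jp sc ip V p)" and e: "Phi C1 = Phi C2"
      obtain x where xV: "x \<in> V" and x: "C1 = coset (Jp sc ip V p) x" using c1 unfolding quot_def by blast
      obtain y where yV: "y \<in> V" and y: "C2 = coset (Jp sc ip V p) y" using c2 unfolding quot_def by blast
      have "p \<circ> x \<circ> p = p \<circ> y \<circ> p" using e Phi_coset[OF xV] Phi_coset[OF yV] x y by simp
      then have "p (x (p h)) = p (y (p h))" for h by (metis comp_apply)
      then show "C1 = C2" unfolding x y by (rule coset_eq_if[OF xV yV])
    qed
    show "Phi ` quot V (Jp sc ip V p) = (\<lambda>x. p \<circ> x \<circ> p) ` V"
      unfolding quot_def image_image using Phi_coset by (intro image_cong) auto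
  qed
next
  fix a x y assume xV: "x \<in> V" and yV: "y \<in> V"
  have "(\<lambda>h. sc a (x h) + y h) \<in> V" using V_add[OF V_sc[OF xV] yV] by simp
  then show "Phi (coset (Jp sc ip V p) (\<lambda>h. sc a (x h) + y h)) =
          (\<lambda>h. sc a (Phi (coset (Jp sc ip V p) x) h) + Phi (coset (Jp sc ip V p) y) h)"
    using Phi_coset xV yV by (simp add: p_add p_sc fun_eq_iff)
next
  show "Phi (coset (Jp sc ip V p) p) = p" using Phi_coset[OF pV] by (simp add: fun_eq_iff)
next
  fix n :: nat and Y assume Yq: "\<forall>i<n. \<forall>j<n. Y i j \<in> quot V (Jp sc ip V p)"
  show "inCtilde sc ip V p n Y \<longleftrightarrow> compr_pos ip p n (\<lambda>i j. Phi (Y i j))"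
  proof
    assume "inCtilde sc ip V p n Y"
    then obtain x where ix: "inCp sc ip V p n x" and Yx: "\<forall>i<n. \<forall>j<n. Y i j = coset (Jp sc ip V p) (x i j)"
      unfolding inCtilde_def by blast
    have xall: "\<forall>i<n. \<forall>j<n. x i j \<in> V" using ix[unfolded inCp_def] by (rule conjunct1)
    have xV: "x i j \<in> V" if ij: "i < n" "j < n" for i j using xall ij by blast
    have "compr_pos ip p n (\<lambda>i j. p \<circ> x i j \<circ> p)" by (rule inCp_compr[OF ix])
    moreover have "compr_pos ip p n (\<lambda>i j. Phi (Y i j)) = compr_pos ip p n (\<lambda>i j. p \<circ> x i j \<circ> p)"
    proof (rule compr_pos_cong)
      fix i j assume ij: "i < n" "j < n"
      have "Y i j = coset (Jp sc ip V p) (x i j)" using Yx ij by blast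
      then show "Phi (Y i j) = p \<circ> x i j \<circ> p" using Phi_coset[OF xV[OF ij]] by simp
    qed
    ultimately show "compr_pos ip p n (\<lambda>i j. Phi (Y i j))" by simp
  next
    assume cpY: "compr_pos ip p n (\<lambda>i j. Phi (Y i j))"
    define y where "y i j = (SOME y. y \<in> V \<and> Y i j = coset (Jp sc ip V p) y)" for i j
    have y: "y i j \<in> V \<and> Y i j = coset (Jp sc ip V p) (y i j)" if ij: "i < n" "j < n" for i j
    proof -
      obtain z where "z \<in> V" "Y i j = coset (Jp sc ip V p) z" using Yq ij unfolding quot_def by blast
      then show ?thesis unfolding y_def by (rule someI[of _ z, OF conjI])
    qed
    have yV: "y i j \<in> V" if "i < n" "j < n" for i j using y[OF that] by blast
    have cp: "compr_pos ip p n (\<lambda>i j. p \<circ> y i j \<circ> p)"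
      using cpY by (subst compr_pos_cong[of n _ "\<lambda>i j. Phi (Y i j)"]) (use y Phi_coset in auto)
    have hm: "ip (p (y i j (p u))) v = ip u (p (y j i (p v)))" if "i < n" "j < n" for i j u v
      by (rule herm_from_pos[OF yV cp that])
    define x where "x i j = (\<lambda>h. sc (1/2) (y i j h) + sc (1/2) (adj ip (y j i) h))" for i j
    have xV: "x i j \<in> V" if "i < n" "j < n" for i j
      unfolding x_def using that by (intro V_lin yV V_adj) auto
    have xh: "ip (x i j u) v = ip u (x j i v)" if "i < n" "j < n" for i j u v
      unfolding x_def using that
      by (simp add: ip_simps adjV[OF yV] adjV2[OF yV] algebra_simps)
    have pyp: "p (adj ip (y j i) (p h)) = p (y i j (p h))" if ij: "i < n" "j < n" for i j h
    proof (rule ip_ext_l)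
      fix v
      have "ip (p (adj ip (y j i) (p h))) v = ip (adj ip (y j i) (p h)) (p v)" by (rule p_sa)
      also have "\<dots> = ip (p h) (y j i (p v))" using ij by (simp add: adjV2[OF yV])
      also have "\<dots> = ip h (p (y j i (p v)))" by (rule p_sa)
      also have "\<dots> = ip (p (y i j (p h))) v" using hm[OF ij] by simp
      finally show "ip (p (adj ip (y j i) (p h))) v = ip (p (y i j (p h))) v" .
    qed
    have pxp: "p (x i j (p h)) = p (y i j (p h))" if ij: "i < n" "j < n" for i j h
    proof -
      have "p (x i j (p h)) = sc (1/2) (p (y i j (p h))) + sc (1/2) (p (y i j (p h)))"
        unfolding x_def using pyp[OF ij] by (simp add: p_add p_sc)
      also have "\<dots> = sc (1/2 + 1/2) (p (y i j (p h)))" by (simp only: sc_add_l)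
      finally show ?thesis by simp
    qed
    have cpx: "compr_pos ip p n (\<lambda>i j. p \<circ> x i j \<circ> p)"
      using cp by (subst compr_pos_cong[of n _ "\<lambda>i j. p \<circ> y i j \<circ> p"]) (auto simp: fun_eq_iff pxp)
    have "inCp sc ip V p n x" by (rule compr_inCp[OF xV xh cpx])
    moreover have "\<forall>i<n. \<forall>j<n. Y i j = coset (Jp sc ip V p) (x i j)"
    proof (intro allI impI)
      fix i j assume ij: "i < n" "j < n"
      have "coset (Jp sc ip V p) (y i j) = coset (Jp sc ip V p) (x i j)"
        using pxp[OF ij] by (intro coset_eq_if yV xV ij) simp
      then show "Y i j = coset (Jp sc ip V p) (x i j)" using y[OF ij] by simp
    qed
    ultimately show "inCtilde sc ip V p n Y" unfolding inCtilde_def by blast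
  qed
qed

end


theorem corollary4p10:
  fixes sc :: "complex \<Rightarrow> 'h::ab_group_add \<Rightarrow> 'h"
    and ip :: "'h \<Rightarrow> 'h \<Rightarrow> complex"
    and V :: "('h \<Rightarrow> 'h) set"
    and p :: "'h \<Rightarrow> 'h"
  assumes "complex_hilbert sc ip"
    and "operator_system sc ip V"
    and "p \<in> V"
    and "is_projection sc ip p"
  shows "\<exists>\<Phi> :: ('h \<Rightarrow> 'h) set \<Rightarrow> ('h \<Rightarrow> 'h).
     bij_betw \<Phi> (quot V (Jp sc ip V p)) ((\<lambda>x. p \<circ> x \<circ> p) ` V) \<and>
     (\<forall>a. \<forall>x\<in>V. \<forall>y\<in>V. \<Phi> (coset (Jp sc ip V p) (\<lambda>h. sc a (x h) + y h)) =
          (\<lambda>h. sc a (\<Phi> (coset (Jp sc ip V p) x) h) + \<Phi> (coset (Jp sc ip V p) y) h)) \<and>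
     \<Phi> (coset (Jp sc ip V p) p) = p \<and>
     (\<forall>n\<ge>1. \<forall>Y. (\<forall>i<n. \<forall>j<n. Y i j \<in> quot V (Jp sc ip V p)) \<longrightarrow>
        (inCtilde sc ip V p n Y \<longleftrightarrow> compr_pos ip p n (\<lambda>i j. \<Phi> (Y i j))))"
proof -
  interpret osys sc ip V p using assms by (unfold_locales) auto
  show ?thesis using main by blast
qed

end
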